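(* Let $A$ be a locally convex topological vector space over $\mathbb C$ and $K\subset A$. Then $$\{V\in\mathrm{Max}\,A: F(V)\cap S(K,\mathbb C\setminus\{0\})\ne\emptyset\}\subset\check K,$$ with equality if $K$ is convex and compact.
   Context: $\mathrm{Max}\,A$ is the set of closed subspaces of $A$; $A^\vee$ the continuous dual; $F(V)=\{\phi\in A^\vee:\phi|_V=0\}$; $S(K,U)=\{\phi\in A^\vee:\phi(K)\subset U\}$; $\check K=\{V\in\mathrm{Max}\,A: V\cap K=\emptyset\}$. *)

theory Defs
  imports "HOL-Analysis.Analysis"
begin

definition cvs_axioms :: "(complex \<Rightarrow> 'a::ab_group_add \<Rightarrow> 'a) \<Rightarrow> bool" where
  "cvs_axioms sm \<longleftrightarrow>
     (\<forall>x. sm 1 x = x) \<and>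
     (\<forall>a b x. sm (a * b) x = sm a (sm b x)) \<and>
     (\<forall>a b x. sm (a + b) x = sm a x + sm b x) \<and>
     (\<forall>a x y. sm a (x + y) = sm a x + sm a y)"

definition c_convex :: "(complex \<Rightarrow> 'a::ab_group_add \<Rightarrow> 'a) \<Rightarrow> 'a set \<Rightarrow> bool" where
  "c_convex sm K \<longleftrightarrow>
     (\<forall>x\<in>K. \<forall>y\<in>K. \<forall>t::real. 0 \<le> t \<and> t \<le> 1 \<longrightarrow>
        sm (complex_of_real t) x + sm (complex_of_real (1 - t)) y \<in> K)"

definition locally_convex_tvs ::
    "(complex \<Rightarrow> 'a::{ab_group_add,topological_space} \<Rightarrow> 'a) \<Rightarrow> bool" where
  "locally_convex_tvs sm \<longleftrightarrow>
     cvs_axioms sm \<and>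
     continuous_on UNIV (\<lambda>p::'a \<times> 'a. fst p + snd p) \<and>
     continuous_on UNIV (\<lambda>p::complex \<times> 'a. sm (fst p) (snd p)) \<and>
     (\<forall>U. open U \<and> 0 \<in> U \<longrightarrow> (\<exists>W. open W \<and> 0 \<in> W \<and> W \<subseteq> U \<and> c_convex sm W))"

definition cdual :: "(complex \<Rightarrow> 'a::{ab_group_add,topological_space} \<Rightarrow> 'a) \<Rightarrow> ('a \<Rightarrow> complex) set" where
  "cdual sm = {\<phi>. (\<forall>x y. \<phi> (x + y) = \<phi> x + \<phi> y) \<and> (\<forall>c x. \<phi> (sm c x) = c * \<phi> x)
                  \<and> continuous_on UNIV \<phi>}"

definition MaxA :: "(complex \<Rightarrow> 'a::{ab_group_add,topological_space} \<Rightarrow> 'a) \<Rightarrow> 'a set set" where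
  "MaxA sm = {V. closed V \<and> 0 \<in> V \<and> (\<forall>x\<in>V. \<forall>y\<in>V. x + y \<in> V) \<and> (\<forall>c. \<forall>x\<in>V. sm c x \<in> V)}"

definition Fann :: "(complex \<Rightarrow> 'a::{ab_group_add,topological_space} \<Rightarrow> 'a) \<Rightarrow> 'a set \<Rightarrow> ('a \<Rightarrow> complex) set" where
  "Fann sm V = {\<phi> \<in> cdual sm. \<forall>v\<in>V. \<phi> v = 0}"

definition Sset :: "(complex \<Rightarrow> 'a::{ab_group_add,topological_space} \<Rightarrow> 'a) \<Rightarrow> 'a set \<Rightarrow> complex set \<Rightarrow> ('a \<Rightarrow> complex) set" where
  "Sset sm K U = {\<phi> \<in> cdual sm. \<phi> ` K \<subseteq> U}"

definition Kcheck :: "(complex \<Rightarrow> 'a::{ab_group_add,topological_space} \<Rightarrow> 'a) \<Rightarrow> 'a set \<Rightarrow> 'a set set" where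
  "Kcheck sm K = {V \<in> MaxA sm. V \<inter> K = {}}"

end

theory Submission imports Defs begin

lemma hb_cone:
  fixes rs :: "real \<Rightarrow> 'a::ab_group_add \<Rightarrow> 'a" and P :: "'a set"
  assumes M: "module rs"
    and Padd: "\<And>x y. x \<in> P \<Longrightarrow> y \<in> P \<Longrightarrow> x + y \<in> P"
    and Pscale: "\<And>x t. x \<in> P \<Longrightarrow> t > 0 \<Longrightarrow> rs t x \<in> P"
    and P0: "0 \<notin> P"
    and x0P: "x0 \<in> P"
    and core: "\<And>y. \<exists>e>0. x0 + rs e y \<in> P"
  shows "\<exists>f. (\<forall>x y. f (x+y) = f x + f y) \<and> (\<forall>r x. f (rs r x) = r * f x) \<and> f x0 = 1 \<and> (\<forall>x\<in>P. 0 \<le> f x)"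
proof -
  interpret module rs by (rule M)
  define good where "good G \<longleftrightarrow> (x0,1) \<in> G \<and> (\<forall>x a b. (x,a)\<in>G \<longrightarrow> (x,b)\<in>G \<longrightarrow> a = b)
     \<and> (\<forall>x a y b. (x,a)\<in>G \<longrightarrow> (y,b)\<in>G \<longrightarrow> (x+y,a+b)\<in>G) \<and> (\<forall>x a r. (x,a)\<in>G \<longrightarrow> (rs r x, r*a)\<in>G)
     \<and> (\<forall>x a. (x,a)\<in>G \<longrightarrow> x\<in>P \<longrightarrow> 0 \<le> a)" for G :: "('a \<times> real) set"
  define G0 where "G0 = range (\<lambda>t. (rs t x0, t))"
  have x0ne: "x0 \<noteq> 0" using x0P P0 by auto
  have inj0: "a = b" if "rs a x0 = rs b x0" for a b
  proof (rule ccontr)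
    assume "a \<noteq> b"
    have "rs (a - b) x0 = 0" using that by (simp add: scale_left_diff_distrib)
    hence "rs (inverse (a-b)) (rs (a-b) x0) = 0" by simp
    hence "x0 = 0" using \<open>a\<noteq>b\<close> by simp
    thus False using x0ne by simp
  qed
  have nn0: "0 \<le> a" if "rs a x0 \<in> P" for a
  proof (rule ccontr)
    assume "\<not> 0 \<le> a"
    hence "rs (-a) x0 \<in> P" using Pscale[OF x0P, of "-a"] by linarith
    hence "rs a x0 + rs (-a) x0 \<in> P" using Padd that by blast
    thus False using P0 by simp
  qed
  have "good G0"
    unfolding good_def G0_def
  proof (intro conjI allI impI)
    show "(x0,1) \<in> range (\<lambda>t. (rs t x0, t))" by (rule range_eqI[of _ _ 1]) simp
  next
    fix x a b assume "(x,a) \<in> range (\<lambda>t. (rs t x0, t))" "(x,b) \<in> range (\<lambda>t. (rs t x0, t))"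
    thus "a = b" using inj0 by auto
  next
    fix x a y b assume "(x,a) \<in> range (\<lambda>t. (rs t x0, t))" "(y,b) \<in> range (\<lambda>t. (rs t x0, t))"
    thus "(x+y,a+b) \<in> range (\<lambda>t. (rs t x0, t))" by (auto intro!: image_eqI[where x="a+b"] simp: scale_left_distrib)
  next
    fix x a r assume "(x,a) \<in> range (\<lambda>t. (rs t x0, t))"
    thus "(rs r x, r*a) \<in> range (\<lambda>t. (rs t x0, t))" by (auto intro!: image_eqI[where x="r*a"])
  next
    fix x a assume "(x,a) \<in> range (\<lambda>t. (rs t x0, t))" "x \<in> P"
    thus "0 \<le> a" using nn0 by auto
  qed
  have gx0: "\<And>G. good G \<Longrightarrow> (x0,1) \<in> G" unfolding good_def by blast
  have gfun: "\<And>G x a b. good G \<Longrightarrow> (x,a)\<in>G \<Longrightarrow> (x,b)\<in>G \<Longrightarrow> a = b" unfolding good_def by blast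
  have gadd: "\<And>G x a y b. good G \<Longrightarrow> (x,a)\<in>G \<Longrightarrow> (y,b)\<in>G \<Longrightarrow> (x+y,a+b)\<in>G" unfolding good_def by blast
  have gsc: "\<And>G x a r. good G \<Longrightarrow> (x,a)\<in>G \<Longrightarrow> (rs r x, r*a)\<in>G" unfolding good_def by blast
  have gnn: "\<And>G x a. good G \<Longrightarrow> (x,a)\<in>G \<Longrightarrow> x\<in>P \<Longrightarrow> 0 \<le> a" unfolding good_def by blast
  have "\<exists>U\<in>{G. good G}. \<forall>X\<in>C. X \<subseteq> U" if C: "C \<in> chains {G. good G}" for C
  proof (cases "C = {}")
    case True thus ?thesis using \<open>good G0\<close> by auto
  next
    case False
    have gC: "good G" if "G \<in> C" for G using C that unfolding chains_def by auto
    have ch: "G1 \<subseteq> G2 \<or> G2 \<subseteq> G1" if "G1 \<in> C" "G2 \<in> C" for G1 G2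
      using chainsD[OF C that] .
    have "good (\<Union>C)"
      unfolding good_def
    proof (intro conjI allI impI)
      obtain G where "G \<in> C" using False by blast
      thus "(x0,1) \<in> \<Union>C" using gC gx0 by blast
    next
      fix x a b assume "(x,a) \<in> \<Union>C" "(x,b) \<in> \<Union>C"
      then obtain G1 G2 where "G1 \<in> C" "G2 \<in> C" "(x,a)\<in>G1" "(x,b)\<in>G2" by auto
      thus "a = b" using ch gC gfun by (metis subsetD)
    next
      fix x a y b assume "(x,a) \<in> \<Union>C" "(y,b) \<in> \<Union>C"
      then obtain G1 G2 where G: "G1 \<in> C" "G2 \<in> C" "(x,a)\<in>G1" "(y,b)\<in>G2" by auto
      show "(x+y,a+b) \<in> \<Union>C"
      proof (cases "G1 \<subseteq> G2")
        case True thus ?thesis using G gC[of G2] gadd[of G2 x a y b] by blast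
      next
        case False
        hence "G2 \<subseteq> G1" using ch G by blast
        thus ?thesis using G gC[of G1] gadd[of G1 x a y b] by blast
      qed
    next
      fix x a r assume "(x,a) \<in> \<Union>C"
      thus "(rs r x, r*a) \<in> \<Union>C" using gC gsc by blast
    next
      fix x a assume "(x,a) \<in> \<Union>C" "x \<in> P"
      thus "0 \<le> a" using gC gnn by blast
    qed
    thus ?thesis by auto
  qed
  then obtain M where Mg: "good M" and Mmax: "\<And>X. good X \<Longrightarrow> M \<subseteq> X \<Longrightarrow> X = M"
    using Zorn_Lemma2[of "{G. good G}"] by auto
  have Mx0: "(x0,1) \<in> M" and Mfun: "\<And>x a b. (x,a)\<in>M \<Longrightarrow> (x,b)\<in>M \<Longrightarrow> a = b"
    and Madd: "\<And>x a y b. (x,a)\<in>M \<Longrightarrow> (y,b)\<in>M \<Longrightarrow> (x+y,a+b)\<in>M"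
    and Msc: "\<And>x a r. (x,a)\<in>M \<Longrightarrow> (rs r x, r*a)\<in>M"
    and Mnn: "\<And>x a. (x,a)\<in>M \<Longrightarrow> x\<in>P \<Longrightarrow> 0 \<le> a"
    using Mg gx0 gfun gadd gsc gnn by blast+
  have M00: "(0,0) \<in> M" using Msc[OF Mx0, of 0] by simp
  have Mneg: "(-x, -a) \<in> M" if "(x,a) \<in> M" for x a using Msc[OF that, of "-1"] by simp
  have total: "\<exists>a. (x,a) \<in> M" for x
  proof (rule ccontr)
    assume nx: "\<nexists>a. (x,a) \<in> M"
    define A where "A = {- a | z a. (z,a) \<in> M \<and> z + x \<in> P}"
    define B where "B = {b | w b. (w,b) \<in> M \<and> w - x \<in> P}"
    obtain e1 where e1: "e1 > 0" "x0 + rs e1 x \<in> P" using core by blast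
    obtain e2 where e2: "e2 > 0" "x0 + rs e2 (-x) \<in> P" using core by blast
    have "rs (1/e1) (x0 + rs e1 x) \<in> P" using Pscale e1 by simp
    hence "rs (1/e1) x0 + x \<in> P" using e1(1) by (simp add: scale_right_distrib)
    moreover have "(rs (1/e1) x0, 1/e1) \<in> M" using Msc[OF Mx0] by force
    ultimately have "-(1/e1) \<in> A" unfolding A_def by blast
    hence Ane: "A \<noteq> {}" by auto
    have "rs (1/e2) (x0 + rs e2 (-x)) \<in> P" using Pscale e2 by simp
    hence "rs (1/e2) x0 - x \<in> P" using e2(1) by (simp add: scale_right_diff_distrib)
    moreover have "(rs (1/e2) x0, 1/e2) \<in> M" using Msc[OF Mx0] by force
    ultimately have b0: "1/e2 \<in> B" unfolding B_def by blast
    have AB: "a \<le> b" if aA: "a \<in> A" and bB: "b \<in> B" for a b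
    proof -
      obtain z a' where z: "a = -a'" "(z,a') \<in> M" "z + x \<in> P" using aA unfolding A_def by blast
      obtain w where w: "(w,b) \<in> M" "w - x \<in> P" using bB unfolding B_def by blast
      have "(z + x) + (w - x) \<in> P" using Padd z w by blast
      hence "z + w \<in> P" by (simp add: algebra_simps)
      hence "0 \<le> a' + b" using Mnn Madd[OF z(2) w(1)] by blast
      thus ?thesis using z by simp
    qed
    define c where "c = Sup A"
    have bdd: "bdd_above A" unfolding bdd_above_def using AB b0 by blast
    have Ac: "a \<le> c" if "a \<in> A" for a unfolding c_def using cSup_upper[OF that bdd] .
    have cB: "c \<le> b" if "b \<in> B" for b unfolding c_def using cSup_least[OF Ane] AB that by blast
    define M' where "M' = {(z + rs t x, a + t*c) | z a t. (z,a) \<in> M}"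
    have inM': "(z + rs t x, a + t*c) \<in> M'" if "(z,a) \<in> M" for z a t
      unfolding M'_def using that by blast
    have "good M'"
      unfolding good_def
    proof (intro conjI allI impI)
      show "(x0,1) \<in> M'" using inM'[OF Mx0, of 0] by simp
    next
      fix y a b assume "(y,a) \<in> M'" "(y,b) \<in> M'"
      then obtain z1 a1 t1 z2 a2 t2 where h: "y = z1 + rs t1 x" "a = a1 + t1*c" "(z1,a1) \<in> M"
         "y = z2 + rs t2 x" "b = a2 + t2*c" "(z2,a2) \<in> M" unfolding M'_def by blast
      have "t1 = t2"
      proof (rule ccontr)
        assume ne: "t1 \<noteq> t2"
        have "(z2 - z1, a2 - a1) \<in> M" using Madd[OF h(6) Mneg[OF h(3)]] by simp
        hence inM: "(rs (1/(t1-t2)) (z2 - z1), (1/(t1-t2)) * (a2 - a1)) \<in> M" using Msc by blast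
        have "rs (t1 - t2) x = z2 - z1"
        proof -
          have eq: "z1 + rs t1 x = z2 + rs t2 x" using h(1,4) by simp
          have grp: "\<And>(z1::'a) z2 u v. z1 + u = z2 + v \<Longrightarrow> u - v = z2 - z1" by (simp add: algebra_simps)
          show ?thesis unfolding scale_left_diff_distrib using grp[OF eq] .
        qed
        moreover have "rs (1/(t1-t2)) (rs (t1 - t2) x) = x" using ne by simp
        ultimately have "rs (1/(t1-t2)) (z2 - z1) = x" by simp
        thus False using nx inM by auto
      qed
      hence "z1 = z2" using h by simp
      hence "a1 = a2" using Mfun h by blast
      thus "a = b" using h \<open>t1 = t2\<close> by simp
    next
      fix y a y' b assume "(y,a) \<in> M'" "(y',b) \<in> M'"
      then obtain z1 a1 t1 z2 a2 t2 where h: "y = z1 + rs t1 x" "a = a1 + t1*c" "(z1,a1) \<in> M"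
         "y' = z2 + rs t2 x" "b = a2 + t2*c" "(z2,a2) \<in> M" unfolding M'_def by blast
      have "(z1 + z2 + rs (t1+t2) x, (a1 + a2) + (t1+t2)*c) \<in> M'" using inM'[OF Madd[OF h(3) h(6)]] .
      moreover have "y + y' = z1 + z2 + rs (t1+t2) x" unfolding h(1,4) scale_left_distrib by (simp add: ac_simps)
      moreover have "a + b = (a1 + a2) + (t1+t2)*c" unfolding h(2,5) by (simp add: algebra_simps)
      ultimately show "(y+y',a+b) \<in> M'" by simp
    next
      fix y a r assume "(y,a) \<in> M'"
      then obtain z1 a1 t1 where h: "y = z1 + rs t1 x" "a = a1 + t1*c" "(z1,a1) \<in> M"
        unfolding M'_def by blast
      have "(rs r z1 + rs (r*t1) x, r*a1 + (r*t1)*c) \<in> M'" using inM'[OF Msc[OF h(3)]] .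
      moreover have "rs r y = rs r z1 + rs (r*t1) x" unfolding h(1) scale_right_distrib scale_scale ..
      moreover have "r * a = r*a1 + (r*t1)*c" unfolding h(2) by (simp add: algebra_simps)
      ultimately show "(rs r y, r*a) \<in> M'" by simp
    next
      fix y a assume "(y,a) \<in> M'" "y \<in> P"
      then obtain z1 a1 t where h: "y = z1 + rs t x" "a = a1 + t*c" "(z1,a1) \<in> M" "z1 + rs t x \<in> P"
        unfolding M'_def by blast
      consider "t = 0" | "t > 0" | "t < 0" by linarith
      thus "0 \<le> a"
      proof cases
        case 1 thus ?thesis using h Mnn by simp
      next
        case 2
        have "1/t > 0" using 2 by simp
        from Pscale[OF h(4) this] have "rs (1/t) (z1 + rs t x) \<in> P" .
        hence "rs (1/t) z1 + x \<in> P" using 2 by (simp add: scale_right_distrib)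
        moreover have "(rs (1/t) z1, (1/t)*a1) \<in> M" using Msc h by blast
        ultimately have "- ((1/t)*a1) \<in> A" unfolding A_def by blast
        hence "- ((1/t)*a1) \<le> c" using Ac by blast
        hence "- a1 \<le> t * c" using 2 by (simp add: field_simps)
        thus ?thesis using h by simp
      next
        case 3
        have "-1/t > 0" using 3 by simp
        from Pscale[OF h(4) this] have "rs (-1/t) (z1 + rs t x) \<in> P" .
        hence "rs (-1/t) z1 - x \<in> P" using 3 by (simp add: scale_right_distrib)
        moreover have "(rs (-1/t) z1, (-1/t)*a1) \<in> M" using Msc h by blast
        ultimately have "(-1/t)*a1 \<in> B" unfolding B_def by blast
        hence "c \<le> (-1/t)*a1" using cB by blast
        hence "t * c \<ge> - a1" using 3 by (simp add: field_simps)
        thus ?thesis using h by simp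
      qed
    qed
    moreover have "M \<subseteq> M'"
    proof
      fix p assume "p \<in> M"
      then obtain z a where "p = (z,a)" "(z,a) \<in> M" by (cases p) auto
      thus "p \<in> M'" using inM'[of z a 0] by simp
    qed
    ultimately have "M' = M" using Mmax by blast
    moreover have "(x, c) \<in> M'" using inM'[OF M00, of 1] by simp
    ultimately show False using nx by auto
  qed
  define f where "f x = (SOME a. (x,a) \<in> M)" for x
  have fM: "(x, f x) \<in> M" for x unfolding f_def using total someI_ex by metis
  have fv: "f x = a" if "(x,a) \<in> M" for x a using Mfun[OF fM that] .
  show ?thesis
  proof (intro exI conjI allI ballI)
    show "f (x+y) = f x + f y" for x y using fv[OF Madd[OF fM fM]] .
    show "f (rs r x) = r * f x" for r x using fv[OF Msc[OF fM]] .
    show "f x0 = 1" using fv[OF Mx0] .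
    show "0 \<le> f x" if "x \<in> P" for x using Mnn[OF fM that] .
  qed
qed


lemma cadd:
  fixes f g :: "'b::topological_space \<Rightarrow> 'a::{ab_group_add,topological_space}"
  assumes "continuous_on UNIV (\<lambda>p::'a\<times>'a. fst p + snd p)" "continuous_on S f" "continuous_on S g"
  shows "continuous_on S (\<lambda>x. f x + g x)"
  using continuous_on_compose2[OF assms(1) continuous_on_Pair[OF assms(2,3)]] by simp

lemma csm:
  fixes f :: "'b::topological_space \<Rightarrow> complex" and g :: "'b \<Rightarrow> 'a::{ab_group_add,topological_space}"
  assumes "continuous_on UNIV (\<lambda>p::complex\<times>'a. sm (fst p) (snd p))" "continuous_on S f" "continuous_on S g"
  shows "continuous_on S (\<lambda>x. sm (f x) (g x))"
  using continuous_on_compose2[OF assms(1) continuous_on_Pair[OF assms(2,3)]] by simp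

theorem corollary7p4:
  fixes sm :: "complex \<Rightarrow> 'a::{ab_group_add,topological_space} \<Rightarrow> 'a"
    and K :: "'a set"
  assumes "locally_convex_tvs sm"
  shows "{V \<in> MaxA sm. Fann sm V \<inter> Sset sm K (- {0}) \<noteq> {}} \<subseteq> Kcheck sm K
     \<and> (c_convex sm K \<and> compact K \<longrightarrow>
          {V \<in> MaxA sm. Fann sm V \<inter> Sset sm K (- {0}) \<noteq> {}} = Kcheck sm K)"
proof -
  have cvs: "cvs_axioms sm" and addc: "continuous_on UNIV (\<lambda>p::'a \<times> 'a. fst p + snd p)"
    and smc: "continuous_on UNIV (\<lambda>p::complex \<times> 'a. sm (fst p) (snd p))"
    and lc: "\<And>U. open U \<Longrightarrow> 0 \<in> U \<Longrightarrow> \<exists>W. open W \<and> 0 \<in> W \<and> W \<subseteq> U \<and> c_convex sm W"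
    using assms unfolding locally_convex_tvs_def by blast+
  interpret C: module sm
    using cvs unfolding cvs_axioms_def by unfold_locales auto
  define rs where "rs r x = sm (complex_of_real r) x" for r x
  have Mrs: "module rs"
    unfolding rs_def using cvs unfolding cvs_axioms_def by unfold_locales (auto simp: of_real_mult)
  interpret R: module rs by (rule Mrs)
  have sub: "Kcheck sm K \<supseteq> {V \<in> MaxA sm. Fann sm V \<inter> Sset sm K (- {0}) \<noteq> {}}"
  proof
    fix V assume "V \<in> {V \<in> MaxA sm. Fann sm V \<inter> Sset sm K (- {0}) \<noteq> {}}"
    then obtain \<phi> where V: "V \<in> MaxA sm" and "\<phi> \<in> Fann sm V" "\<phi> \<in> Sset sm K (- {0})" by auto
    hence "\<forall>v\<in>V. \<phi> v = 0" "\<forall>k\<in>K. \<phi> k \<noteq> 0" unfolding Fann_def Sset_def by auto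
    hence "V \<inter> K = {}" by auto
    thus "V \<in> Kcheck sm K" using V unfolding Kcheck_def by auto
  qed
  have sup: "V \<in> {V \<in> MaxA sm. Fann sm V \<inter> Sset sm K (- {0}) \<noteq> {}}"
    if Kc: "c_convex sm K" and Kk: "compact K" and VK: "V \<in> Kcheck sm K" for V
  proof -
    have VM: "V \<in> MaxA sm" and VKd: "V \<inter> K = {}" using VK unfolding Kcheck_def by auto
    have Vcl: "closed V" and V0: "0 \<in> V" and Vadd: "\<And>x y. x \<in> V \<Longrightarrow> y \<in> V \<Longrightarrow> x + y \<in> V"
      and Vsm: "\<And>c x. x \<in> V \<Longrightarrow> sm c x \<in> V" using VM unfolding MaxA_def by auto
    have Vneg: "-x \<in> V" if "x \<in> V" for x using Vsm[OF that, of "-1"] by simp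
    show ?thesis
    proof (cases "K = {}")
      case True
      have "(\<lambda>_. 0) \<in> cdual sm" unfolding cdual_def by auto
      hence "(\<lambda>_. 0) \<in> Fann sm V \<inter> Sset sm K (- {0})" unfolding Fann_def Sset_def using True by auto
      thus ?thesis using VM by blast
    next
      case False
      then obtain k0 where k0: "k0 \<in> K" by auto
      have ctrans: "continuous_on UNIV (\<lambda>x. x + a)" for a :: 'a
        by (rule cadd[OF addc]) auto
      have crs: "continuous_on UNIV (\<lambda>x. rs r (g x))" if "continuous_on UNIV g" for r and g :: "'a \<Rightarrow> 'a"
        unfolding rs_def by (rule csm[OF smc]) (auto simp: that)
      have crsr: "continuous_on UNIV (\<lambda>r. y + rs r u)" for y u :: 'a
        unfolding rs_def by (rule cadd[OF addc continuous_on_const csm[OF smc continuous_on_of_real_id continuous_on_const]])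
      define S where "S = (\<lambda>p::'a\<times>'a. fst p + snd p) -` (- V)"
      have "open S" unfolding S_def using Vcl by (intro open_vimage[OF _ addc]) auto
      moreover have "{0} \<times> K \<subseteq> S" unfolding S_def using VKd by auto
      ultimately obtain X0 where X0: "0 \<in> X0" "open X0" "X0 \<times> K \<subseteq> S"
        using Elementary_Topology.tube_lemma[OF Kk] by blast
      obtain W where W: "open W" "0 \<in> W" "W \<subseteq> X0" "c_convex sm W" using lc[OF X0(2,1)] by blast
      have WK: "w + k \<notin> V" if "w \<in> W" "k \<in> K" for w k
      proof -
        have "(w,k) \<in> X0 \<times> K" using W(3) that by auto
        thus ?thesis using X0(3) unfolding S_def by auto
      qed
      define P where "P = {y. \<exists>t>0. \<exists>k\<in>K. \<exists>v\<in>V. rs t y - k - v \<in> W}"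
      have Popen: "open P"
        unfolding open_subopen[of P]
      proof
        fix y assume "y \<in> P"
        then obtain t k v where tkv: "t > 0" "k \<in> K" "v \<in> V" "rs t y - k - v \<in> W" unfolding P_def by blast
        define T where "T = (\<lambda>y. rs t y + (- k - v)) -` W"
        have oT: "open T" unfolding T_def
          by (rule open_vimage[OF W(1) cadd[OF addc crs[OF continuous_on_id] continuous_on_const]])
        have eq: "\<And>z. z + (- k - v) = z - k - v" by (simp add: algebra_simps)
        moreover have "y \<in> T" using tkv(4) unfolding T_def eq by simp
        moreover have "T \<subseteq> P"
        proof
          fix y' assume "y' \<in> T"
          hence "rs t y' - k - v \<in> W" unfolding T_def eq by simp
          thus "y' \<in> P" unfolding P_def using tkv(1-3) by blast
        qed
        ultimately show "\<exists>T. open T \<and> y \<in> T \<and> T \<subseteq> P" using oT by blast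
      qed
      have inP: "y \<in> P" if "t > 0" "k \<in> K" "v \<in> V" "rs t y - k - v \<in> W" for t k v y
        unfolding P_def using that by blast
      have core: "\<exists>e>0. y + rs e u \<in> P" if "y \<in> P" for y u
      proof -
        have "open ((\<lambda>r. y + rs r u) -` P)" by (rule open_vimage[OF Popen crsr])
        moreover have "0 \<in> (\<lambda>r. y + rs r u) -` P" using that by simp
        ultimately obtain e where e: "e > 0" "ball 0 e \<subseteq> (\<lambda>r. y + rs r u) -` P"
          unfolding open_contains_ball by blast
        have "e/2 \<in> ball 0 e" using e(1) by simp
        hence "y + rs (e/2) u \<in> P" using e(2) by blast
        thus ?thesis using e(1) by (intro exI[of _ "e/2"]) auto
      qed
      have cK: "rs a x + rs (1-a) y \<in> K" if "x \<in> K" "y \<in> K" "0 \<le> a" "a \<le> 1" for a x y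
        using Kc that unfolding c_convex_def rs_def by auto
      have cW: "rs a x + rs (1-a) y \<in> W" if "x \<in> W" "y \<in> W" "0 \<le> a" "a \<le> 1" for a x y
        using W(4) that unfolding c_convex_def rs_def by auto
      have Vrs: "rs a x \<in> V" if "x \<in> V" for a x using Vsm that unfolding rs_def by blast
      have Padd: "y1 + y2 \<in> P" if y1P: "y1 \<in> P" and y2P: "y2 \<in> P" for y1 y2
      proof -
        obtain t1 k1 v1 where h1: "t1 > 0" "k1 \<in> K" "v1 \<in> V" "rs t1 y1 - k1 - v1 \<in> W"
          using y1P unfolding P_def by blast
        obtain t2 k2 v2 where h2: "t2 > 0" "k2 \<in> K" "v2 \<in> V" "rs t2 y2 - k2 - v2 \<in> W"
          using y2P unfolding P_def by blast
        define T where "T = t1 * t2 / (t1 + t2)"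
        define l where "l = t2 / (t1 + t2)"
        have l01: "0 \<le> l" "l \<le> 1" using h1(1) h2(1) unfolding l_def by auto
        have e1: "l * t1 = T" unfolding l_def T_def by simp
        have e2: "(1 - l) * t2 = T" unfolding l_def T_def using h1(1) h2(1) by (simp add: field_simps)
        have "T > 0" unfolding T_def using h1(1) h2(1) by simp
        moreover have "rs l k1 + rs (1-l) k2 \<in> K" using cK h1(2) h2(2) l01 by blast
        moreover have "rs l v1 + rs (1-l) v2 \<in> V" using Vadd Vrs h1(3) h2(3) by blast
        moreover have "rs l (rs t1 y1 - k1 - v1) + rs (1-l) (rs t2 y2 - k2 - v2) \<in> W"
          using cW h1(4) h2(4) l01 by blast
        moreover have "rs l (rs t1 y1 - k1 - v1) + rs (1-l) (rs t2 y2 - k2 - v2)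
            = rs T (y1 + y2) - (rs l k1 + rs (1-l) k2) - (rs l v1 + rs (1-l) v2)"
          unfolding R.scale_right_diff_distrib R.scale_right_distrib R.scale_scale e1 e2
          by (simp add: algebra_simps)
        ultimately show ?thesis unfolding P_def by force
      qed
      have Pscale: "rs s y \<in> P" if yP: "y \<in> P" and s0: "s > 0" for y s
      proof -
        obtain t k v where h: "t > 0" "k \<in> K" "v \<in> V" "rs t y - k - v \<in> W"
          using yP unfolding P_def by blast
        have "rs (t/s) (rs s y) = rs t y" using s0 by simp
        thus ?thesis using inP[of "t/s" k v "rs s y"] h s0 by simp
      qed
      have P0: "0 \<notin> P"
      proof
        assume "0 \<in> P"
        then obtain t k v where h: "k \<in> K" "v \<in> V" "- k - v \<in> W" unfolding P_def by auto
        have "(- k - v) + k = - v" by (simp add: algebra_simps)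
        thus False using WK[OF h(3) h(1)] Vneg[OF h(2)] by simp
      qed
      have k0P: "k0 \<in> P" using inP[of 1 k0 0 k0] k0 V0 W(2) by simp
      obtain f where fadd: "\<And>x y. f (x+y) = f x + f y" and fsc: "\<And>r x. f (rs r x) = r * f x"
          and fk0: "f k0 = 1" and fP: "\<And>x. x \<in> P \<Longrightarrow> 0 \<le> f x"
        using hb_cone[OF Mrs Padd Pscale P0 k0P core[OF k0P]] by blast
      have f0: "f 0 = 0" using fadd[of 0 0] by simp
      have fneg: "f (- x) = - f x" for x using fadd[of x "-x"] f0 by simp
      have fdiff: "f (x - y) = f x - f y" for x y using fadd[of x "-y"] fneg[of y] by simp
      have fpos: "f y > 0" if yP: "y \<in> P" for y
      proof -
        obtain e where e: "e > 0" "y + rs e (-k0) \<in> P" using core[OF yP] by blast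
        have "0 \<le> f (y + rs e (-k0))" using fP e(2) by blast
        also have "\<dots> = f y - e" using fdiff fsc fk0 by simp
        finally show ?thesis using e(1) by simp
      qed
      have fK: "f k > 0" if "k \<in> K" for k
        using fpos inP[of 1 k 0 k] that V0 W(2) by simp
      have fV: "f v = 0" if "v \<in> V" for v
      proof (rule ccontr)
        assume ne: "f v \<noteq> 0"
        define s where "s = - f k0 / f v"
        have "k0 + rs s v \<in> P" using inP[of 1 k0 "rs s v" "k0 + rs s v"] k0 Vrs[OF that, of s] W(2)
          by simp
        hence "f (k0 + rs s v) > 0" by (rule fpos)
        moreover have "f (k0 + rs s v) = 0" using fadd fsc ne unfolding s_def by (simp only:) simp
        ultimately show False by simp
      qed
      define Nb where "Nb = (\<lambda>u. k0 + rs 1 u) -` P \<inter> (\<lambda>u. k0 + rs (-1) u) -` P"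
      have c1: "continuous_on UNIV (\<lambda>u. k0 + rs a u)" for a
        by (rule cadd[OF addc continuous_on_const crs[OF continuous_on_id]])
      have Oopen: "open Nb" unfolding Nb_def
        by (intro open_Int open_vimage[OF Popen c1])
      have O0: "0 \<in> Nb" unfolding Nb_def using k0P by simp
      have Ob: "\<bar>f u\<bar> \<le> 1" if "u \<in> Nb" for u
      proof -
        have "0 \<le> f (k0 + rs 1 u)" "0 \<le> f (k0 + rs (-1) u)" using that fP unfolding Nb_def by auto
        thus ?thesis using fadd fdiff fsc fk0 by simp
      qed
      have fcont: "continuous_on UNIV f"
        unfolding continuous_on_open_vimage[OF open_UNIV]
      proof (intro allI impI)
        fix B :: "real set" assume oB: "open B"
        have "open (f -` B)" unfolding open_subopen[of "f -` B"]
        proof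
          fix x assume "x \<in> f -` B"
          then obtain e where e: "e > 0" "ball (f x) e \<subseteq> B" using oB unfolding open_contains_ball by auto
          define U where "U = (\<lambda>y. rs (2/e) (y + (-x))) -` Nb"
          have "open U" unfolding U_def by (rule open_vimage[OF Oopen crs[OF ctrans]])
          moreover have "x \<in> U" unfolding U_def using O0 by simp
          moreover have "f y \<in> B" if "y \<in> U" for y
          proof -
            have bd: "\<bar>f (rs (2/e) (y + (-x)))\<bar> \<le> 1" using Ob that unfolding U_def by blast
            have eq: "f (rs (2/e) (y + (-x))) = (2/e) * (f y - f x)" using fsc fadd fneg by (simp only:) simp
            have "\<bar>(2/e) * (f y - f x)\<bar> \<le> 1" using bd unfolding eq .
            hence "\<bar>2/e\<bar> * \<bar>f y - f x\<bar> \<le> 1" unfolding abs_mult .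
            moreover have "\<bar>2/e\<bar> = 2/e" using e by simp
            ultimately have "(2/e) * \<bar>f y - f x\<bar> \<le> 1" by simp
            hence "\<bar>f y - f x\<bar> \<le> e/2" using e by (simp add: field_simps)
            hence "f y \<in> ball (f x) e" using e by (simp add: dist_real_def abs_minus_commute)
            thus ?thesis using e(2) by blast
          qed
          ultimately show "\<exists>T. open T \<and> x \<in> T \<and> T \<subseteq> f -` B" by blast
        qed
        thus "open (f -` B \<inter> UNIV)" by simp
      qed
      define \<phi> where "\<phi> x = complex_of_real (f x) - \<i> * complex_of_real (f (sm \<i> x))" for x
      have fsm: "f (sm c x) = Re c * f x + Im c * f (sm \<i> x)" for c x
      proof -
        have "sm c x = sm (complex_of_real (Re c)) x + sm (complex_of_real (Im c)) (sm \<i> x)"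
          by (subst complex_eq) (simp add: C.scale_left_distrib mult.commute)
        hence "f (sm c x) = f (sm (complex_of_real (Re c)) x) + f (sm (complex_of_real (Im c)) (sm \<i> x))"
          using fadd by metis
        also have "\<dots> = Re c * f x + Im c * f (sm \<i> x)" using fsc[unfolded rs_def] by metis
        finally show ?thesis .
      qed
      have "\<phi> \<in> cdual sm"
        unfolding cdual_def
      proof (intro CollectI conjI allI)
        show "\<phi> (x + y) = \<phi> x + \<phi> y" for x y unfolding \<phi>_def using fadd by (simp add: C.scale_right_distrib algebra_simps)
        show "\<phi> (sm c x) = c * \<phi> x" for c x
          unfolding \<phi>_def C.scale_scale fsm[of c x] fsm[of "\<i> * c" x]
          by (simp add: complex_eq_iff algebra_simps)
        have "continuous_on UNIV (\<lambda>x. f (sm \<i> x))"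
          by (rule continuous_on_compose2[OF fcont]) (auto intro!: csm[OF smc])
        thus "continuous_on UNIV \<phi>" unfolding \<phi>_def using fcont by (intro continuous_intros) auto
      qed
      moreover have "\<phi> v = 0" if "v \<in> V" for v unfolding \<phi>_def using fV that Vsm by simp
      moreover have "\<phi> k \<noteq> 0" if "k \<in> K" for k
      proof
        assume "\<phi> k = 0"
        hence "Re (\<phi> k) = 0" by simp
        thus False using fK[OF that] unfolding \<phi>_def by simp
      qed
      ultimately have "\<phi> \<in> Fann sm V \<inter> Sset sm K (- {0})" unfolding Fann_def Sset_def by auto
      thus ?thesis using VM by blast
    qed
  qed
  show ?thesis using sub sup by blast
qed

end
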